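(* Let $1\le d<N$. Draw a random subspace $P$ uniformly with respect to the Haar measure from $G(d,N)$, and let $x\in\mathbb{R}^N$ be a randomly chosen vector. Then, with probability $1$, the quantities $$\|Pe_i\|_2^2\ (i\in\{1,\dots,N-1\}),\qquad \|P(e_j+e_k)\|_2^2\ (j\in\{1,\dots,d\},\ k\in\{j+1,\dots,N\}),\qquad \|Px\|_2^2$$ uniquely determine $P$, i.e. $P$ is the only $H\in G(d,N)$ for which all of these quantities coincide with the corresponding quantities $\|He_i\|_2^2$, $\|H(e_j+e_k)\|_2^2$, $\|Hx\|_2^2$.
   Context: $G(d,N)$ denotes the Grassmannian of $d$-dimensional linear subspaces of $\mathbb{R}^N$; for a subspace $H$, $Hy$ denotes the orthogonal projection of $y$ onto $H$. $e_1,\dots,e_N$ are the canonical unit vectors of $\mathbb{R}^N$. The random vector $x$ is understood to be drawn independently of $P$ from a probability distribution absolutely continuous with respect to Lebesgue measure. *)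

theory Defs
  imports "HOL-Probability.Probability"
begin

text \<open>Subspaces of R^N are represented by their orthogonal projection matrices:
  H in G(d,N) corresponds to the symmetric idempotent N x N matrix of rank d,
  and H y is the matrix-vector product.\<close>

definition grassmannian :: "nat \<Rightarrow> (real^'n^'n) set" where
  "grassmannian d = {P. transpose P = P \<and> P ** P = P \<and> rank P = d}"

text \<open>Haar (uniform) probability measure on G(d,N): a Borel probability measure on
  N x N matrices, concentrated on G(d,N), invariant under the action
  H \<mapsto> Q H of the orthogonal group (on projections: P \<mapsto> Q P Q^T).
  The invariant probability measure is unique, so this characterises Haar measure.\<close>

definition haar_grassmannian :: "nat \<Rightarrow> (real^'n^'n) measure \<Rightarrow> bool" where
  "haar_grassmannian d M \<longleftrightarrow>
     sets M = sets borel \<and> prob_space M \<and> emeasure M (grassmannian d) = 1 \<and>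
     (\<forall>Q::real^'n^'n. orthogonal_matrix Q \<longrightarrow>
        distr M M (\<lambda>P. Q ** P ** transpose Q) = M)"

text \<open>Canonical basis e_1,...,e_N: the index type is linearly ordered, and the
  position of index i is card {j. j < i} + 1.\<close>

definition idx_pos :: "'n::{finite,linorder} \<Rightarrow> nat" where
  "idx_pos i = card {j. j < i} + 1"

definition unit_vec :: "'n::finite \<Rightarrow> real^'n" where
  "unit_vec i = axis i 1"

definition determined_by_measurements ::
  "nat \<Rightarrow> real^('n::{finite,linorder})^('n::{finite,linorder}) \<Rightarrow> real^('n::{finite,linorder}) \<Rightarrow> bool" where
  "determined_by_measurements d P x \<longleftrightarrow>
     (\<forall>H \<in> grassmannian d.
        ((\<forall>i. idx_pos i \<le> CARD('n) - 1 \<longrightarrow>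
              norm (H *v unit_vec i)^2 = norm (P *v unit_vec i)^2) \<and>
         (\<forall>j k. idx_pos j \<le> d \<and> j < k \<longrightarrow>
              norm (H *v (unit_vec j + unit_vec k))^2 = norm (P *v (unit_vec j + unit_vec k))^2) \<and>
         norm (H *v x)^2 = norm (P *v x)^2) \<longrightarrow> H = P)"

end

theory Submission
  imports Defs "HOL-Computational_Algebra.Polynomial"
begin


definition pos :: "'n::{finite,linorder} \<Rightarrow> nat" where
  "pos i = card {j. j < i}"

lemma idx_pos_pos: "idx_pos i = pos i + 1"
  by (simp add: idx_pos_def pos_def)

lemma pos_less_mono:
  fixes i k :: "'n::{finite,linorder}"
  assumes "i < k" shows "pos i < pos k"
  unfolding pos_def
  by (rule psubset_card_mono) (use assms in auto)

lemma pos_le_mono: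
  fixes i k :: "'n::{finite,linorder}"
  assumes "i \<le> k" shows "pos i \<le> pos k"
  using pos_less_mono[of i k] assms by (cases "i = k") (auto simp: less_imp_le order.order_iff_strict)

lemma pos_inj: "inj (pos :: 'n::{finite,linorder} \<Rightarrow> nat)"
  by (metis injI linorder_neq_iff pos_less_mono less_irrefl)

lemma pos_lt: "pos (i::'n::{finite,linorder}) < CARD('n)"
  unfolding pos_def by (rule psubset_card_mono) auto

lemma pos_image: "pos ` (UNIV :: 'n::{finite,linorder} set) = {..<CARD('n)}"
proof -
  have "pos ` (UNIV :: 'n set) \<subseteq> {..<CARD('n)}" using pos_lt by auto
  moreover have "card (pos ` (UNIV :: 'n set)) = card {..<CARD('n)}"
    using card_image[OF pos_inj] by simp
  ultimately show ?thesis by (simp add: card_subset_eq)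
qed

lemma card_pos_less:
  assumes "d \<le> CARD('n::{finite,linorder})"
  shows "card {i::'n. pos i < d} = d"
proof -
  have "{i::'n. pos i < d} = pos -` {..<d}" by auto
  have "pos ` {i::'n. pos i < d} = {..<d}"
   
  proof
    show "pos ` {i::'n. pos i < d} \<subseteq> {..<d}" by auto
    show "{..<d} \<subseteq> pos ` {i::'n. pos i < d}"
    proof
      fix x assume "x \<in> {..<d}"
      then have "x \<in> pos ` (UNIV::'n set)" using pos_image[where 'n='n] assms by auto
      then show "x \<in> pos ` {i::'n. pos i < d}" using \<open>x \<in> {..<d}\<close> by auto
    qed
  qed
  then have "card (pos ` {i::'n. pos i < d}) = d" by simp
  moreover have "card (pos ` {i::'n. pos i < d}) = card {i::'n. pos i < d}"
    by (rule card_image) (meson inj_on_subset pos_inj subset_UNIV)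
  ultimately show ?thesis by simp
qed

lemma pos_top_unique:
  fixes i k :: "'n::{finite,linorder}"
  assumes "CARD('n) - 1 \<le> pos i" "CARD('n) - 1 \<le> pos k"
  shows "i = k"
proof (rule ccontr)
  assume "i \<noteq> k"
  then consider "i < k" | "k < i" by (meson linorder_neq_iff)
  then show False
  proof cases
    case 1
    have "{j. j < i} \<subseteq> UNIV - {i, k}" using 1 by auto
    then have "pos i \<le> card (UNIV - {i,k::'n})" unfolding pos_def by (rule card_mono[rotated]) auto
    also have "\<dots> = CARD('n) - 2" using 1 by (subst card_Diff_subset) auto
    moreover have "card {i,k} \<le> CARD('n)" by (rule card_mono) auto
    ultimately show False using assms(1) 1 by auto
  next
    case 2
    have "{j. j < k} \<subseteq> UNIV - {i, k}" using 2 by auto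
    then have "pos k \<le> card (UNIV - {i,k::'n})" unfolding pos_def by (rule card_mono[rotated]) auto
    also have "\<dots> = CARD('n) - 2" using 2 by (subst card_Diff_subset) auto
    moreover have "card {i,k} \<le> CARD('n)" by (rule card_mono) auto
    ultimately show False using assms(2) 2 by auto
  qed
qed



definition symidem :: "real^'n^'n \<Rightarrow> bool" where
  "symidem X \<longleftrightarrow> transpose X = X \<and> X ** X = X"

definition ker_on :: "'n set \<Rightarrow> real^'n^'n \<Rightarrow> bool" where
  "ker_on I X \<longleftrightarrow> (\<exists>c. c \<noteq> 0 \<and> (\<forall>i. i \<notin> I \<longrightarrow> c$i = 0) \<and> X *v c = 0)"

definition blk :: "'n set \<Rightarrow> real^'n^'n \<Rightarrow> real^'n^'n" where
  "blk I X = (\<chi> a b. if a \<in> I \<and> b \<in> I then X$a$b else if a = b then 1 else 0)"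

lemma symidem_inner:
  assumes "symidem X" shows "(X *v x) \<bullet> y = x \<bullet> (X *v y)"
proof -
  have "(X *v x) = x v* X" using assms unfolding symidem_def
    by (metis transpose_matrix_vector)
  then show ?thesis by (simp add: dot_lmul_matrix)
qed

lemma symidem_fix:
  assumes "symidem X" shows "X *v (X *v x) = X *v x"
  using assms by (simp add: symidem_def matrix_vector_mul_assoc)

lemma symidem_norm:
  assumes "symidem X" shows "norm (X *v v)^2 = v \<bullet> (X *v v)"
  by (metis assms power2_norm_eq_inner symidem_fix symidem_inner)

lemma blk_apply_out:
  assumes "a \<notin> I" shows "(blk I X *v c)$a = c$a"
proof -
  have "(blk I X *v c)$a = (\<Sum>b\<in>UNIV. (if b = a then 1 else 0) * c$b)"
    using assms by (auto simp: blk_def matrix_vector_mult_def intro!: sum.cong)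
  also have "\<dots> = (\<Sum>b\<in>UNIV. if b = a then c$b else 0)" by (rule sum.cong) auto
  also have "\<dots> = c$a" by simp
  finally show ?thesis .
qed

lemma blk_apply_in:
  assumes "a \<in> I" "\<forall>i. i \<notin> I \<longrightarrow> c$i = 0" shows "(blk I X *v c)$a = (X *v c)$a"
  using assms by (auto simp: blk_def matrix_vector_mult_def intro!: sum.cong)

lemma det_blk_zero_iff:
  assumes "symidem X"
  shows "det (blk I X) = 0 \<longleftrightarrow> ker_on I X"
proof -
  have "det (blk I X) \<noteq> 0 \<longleftrightarrow> inj ((*v) (blk I X))"
    using det_nz_iff_inj[of "(*v) (blk I X)"] by simp
  also have "\<dots> \<longleftrightarrow> (\<forall>c. blk I X *v c = 0 \<longrightarrow> c = 0)"
    using linear_inj_iff_eq_0[of "(*v) (blk I X)"] by simp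
  finally have 1: "det (blk I X) = 0 \<longleftrightarrow> (\<exists>c. c \<noteq> 0 \<and> blk I X *v c = 0)" by blast
  have 2: "blk I X *v c = 0 \<longleftrightarrow> (\<forall>i. i \<notin> I \<longrightarrow> c$i = 0) \<and> X *v c = 0" for c
  proof
    assume h: "blk I X *v c = 0"
    then have s: "\<forall>i. i \<notin> I \<longrightarrow> c$i = 0" using blk_apply_out by (metis zero_index)
    have z: "\<forall>a\<in>I. (X *v c)$a = 0" using blk_apply_in[OF _ s] h by (metis zero_index)
    have "c \<bullet> (X *v c) = (\<Sum>a\<in>UNIV. c$a * (X *v c)$a)" by (simp add: inner_vec_def)
    also have "\<dots> = 0" using s z by (intro sum.neutral) auto
    finally have "norm (X *v c)^2 = 0" using symidem_norm[OF assms] by simp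
    then show "(\<forall>i. i \<notin> I \<longrightarrow> c$i = 0) \<and> X *v c = 0" using s by simp
  next
    assume h: "(\<forall>i. i \<notin> I \<longrightarrow> c$i = 0) \<and> X *v c = 0"
    show "blk I X *v c = 0"
    proof (subst vec_eq_iff, intro allI)
      fix a show "(blk I X *v c)$a = 0$a"
        using h blk_apply_in[of a I c X] blk_apply_out[of a I X c] by (cases "a \<in> I") auto
    qed
  qed
  show ?thesis unfolding 1 ker_on_def using 2 by blast
qed



lemma orthonormal_expand:
  fixes B :: "(real^'n) set"
  assumes fin: "finite B" and orth: "pairwise orthogonal B" and nrm: "\<And>x. x \<in> B \<Longrightarrow> norm x = 1"
    and y: "y \<in> span B"
  shows "y = (\<Sum>b\<in>B. (b \<bullet> y) *\<^sub>R b)"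
proof -
  obtain u where u: "y = (\<Sum>v\<in>B. u v *\<^sub>R v)" using y span_finite[OF fin] by auto
  have "b \<bullet> y = u b" if b: "b \<in> B" for b
  proof -
    have "b \<bullet> y = (\<Sum>v\<in>B. u v * (b \<bullet> v))" by (simp add: u inner_sum_right)
    also have "\<dots> = (\<Sum>v\<in>B. if v = b then u v else 0)"
    proof (rule sum.cong)
      fix v assume v: "v \<in> B"
      show "u v * (b \<bullet> v) = (if v = b then u v else 0)"
      proof (cases "v = b")
        case True
        then show ?thesis using nrm[OF b] by (simp add: power2_norm_eq_inner[symmetric])
      next
        case False
        then show ?thesis using orth v b by (simp add: pairwise_def orthogonal_def)
      qed
    qed simp
    also have "\<dots> = u b" using fin b by simp
    finally show ?thesis .
  qed
  then show ?thesis using u by (metis (no_types, lifting) sum.cong)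
qed

lemma diag_entry: "(X *v axis i (1::real))$i = X$i$i"
proof -
  have "(X *v axis i (1::real))$i = (\<Sum>j\<in>UNIV. X $ i $ j * (if j = i then 1 else 0))"
    by (simp add: matrix_vector_mult_def axis_def)
  also have "\<dots> = (\<Sum>k\<in>UNIV. if k = i then X$i$k else 0)"
    by (rule sum.cong) auto
  finally show ?thesis by simp
qed

lemma trace_symidem:
  fixes X :: "real^'n^'n"
  assumes X: "symidem X"
  shows "trace X = real (rank X)"
proof -
  define V where "V = range ((*v) X)"
  have "subspace V" unfolding V_def
    by (simp add: linear_subspace_image)
  then obtain B where BV: "B \<subseteq> V" and orth: "pairwise orthogonal B"
    and nrm: "\<And>x. x \<in> B \<Longrightarrow> norm x = 1"
    and ind: "independent B" and cB: "card B = dim V" and sB: "span B = V"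
    by (rule orthonormal_basis_subspace) blast
  have fin: "finite B" using ind by (simp add: independent_bound)
  have fixb: "X *v b = b" if "b \<in> B" for b
    using that BV symidem_fix[OF X] unfolding V_def by auto
  have diag: "X$i$i = (\<Sum>b\<in>B. (b$i) * (b$i))" for i
  proof -
    have "X *v axis i 1 \<in> span B" using sB unfolding V_def by auto
    then have e: "X *v axis i 1 = (\<Sum>b\<in>B. (b \<bullet> (X *v axis i 1)) *\<^sub>R b)"
      using orthonormal_expand[OF fin orth] nrm by blast
    have c: "b \<bullet> (X *v axis i 1) = b$i" if "b \<in> B" for b
      using symidem_inner[OF X, of b "axis i 1"] fixb[OF that] by (simp add: inner_axis)
    have "X$i$i = (X *v axis i 1)$i" by (simp add: diag_entry)
    also have "\<dots> = (\<Sum>b\<in>B. (b \<bullet> (X *v axis i 1)) * b$i)"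
      by (subst e) (simp add: sum_component)
    also have "\<dots> = (\<Sum>b\<in>B. (b$i) * (b$i))" using c by simp
    finally show ?thesis .
  qed
  have "trace X = (\<Sum>i\<in>UNIV. \<Sum>b\<in>B. (b$i) * (b$i))" by (simp add: trace_def diag)
  also have "\<dots> = (\<Sum>b\<in>B. \<Sum>i\<in>UNIV. (b$i) * (b$i))" by (rule sum.swap)
  also have "\<dots> = (\<Sum>b\<in>B. 1)"
  proof (rule sum.cong)
    fix b assume "b \<in> B"
    then have "b \<bullet> b = 1" using nrm by (metis norm_eq_1)
    then show "(\<Sum>i\<in>UNIV. (b$i) * (b$i)) = 1" by (simp add: inner_vec_def)
  qed simp
  also have "\<dots> = real (card B)" by simp
  also have "\<dots> = real (rank X)" by (simp add: cB V_def rank_dim_range)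
  finally show ?thesis .
qed



lemma mat_axis_entry: "(X *v axis k (1::real))$j = X$j$k"
proof -
  have "(X *v axis k (1::real))$j = (\<Sum>i\<in>UNIV. X $ j $ i * (if i = k then 1 else 0))"
    by (simp add: matrix_vector_mult_def axis_def)
  also have "\<dots> = (\<Sum>i\<in>UNIV. if i = k then X$j$i else 0)"
    by (rule sum.cong) auto
  finally show ?thesis by simp
qed

lemma symidem_sym: "symidem X \<Longrightarrow> X$k$j = X$j$k"
  unfolding symidem_def by (metis transpose_def vec_lambda_beta)

lemma quad1: "symidem X \<Longrightarrow> norm (X *v axis i 1)^2 = X$i$i"
  by (simp add: symidem_norm inner_axis' mat_axis_entry)

lemma quad2:
  assumes "symidem X"
  shows "norm (X *v (axis j 1 + axis k 1))^2 = X$j$j + X$k$k + 2 * X$j$k"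
proof -
  have "norm (X *v (axis j 1 + axis k 1))^2 = (axis j 1 + axis k 1) \<bullet> (X *v (axis j 1 + axis k 1))"
    by (rule symidem_norm[OF assms])
  also have "\<dots> = X$j$j + X$j$k + X$k$j + X$k$k"
    by (simp add: matrix_vector_right_distrib inner_add_left inner_add_right inner_axis' mat_axis_entry)
  finally show ?thesis using symidem_sym[OF assms, of k j] by simp
qed

lemma grass_symidem: "P \<in> grassmannian d \<Longrightarrow> symidem P"
  by (simp add: grassmannian_def symidem_def)

lemma grass_rank: "P \<in> grassmannian d \<Longrightarrow> rank P = d"
  by (simp add: grassmannian_def)

lemma span_support:
  fixes S :: "'n::finite set"
  shows "span ((\<lambda>j. axis j (1::real)) ` S) \<subseteq> {c::real^'n. \<forall>i. i \<notin> S \<longrightarrow> c$i = 0}"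
proof (rule span_minimal)
  show "(\<lambda>j. axis j (1::real)) ` S \<subseteq> {c::real^'n. \<forall>i. i \<notin> S \<longrightarrow> c$i = 0}"
    by (auto simp: axis_def)
  show "subspace {c::real^'n. \<forall>i. i \<notin> S \<longrightarrow> c$i = 0}"
    by (auto simp: subspace_def)
qed

lemma dim_axis_set:
  fixes S :: "'n::finite set"
  shows "dim ((\<lambda>j. axis j (1::real)) ` S) = card S"
proof -
  have "(\<lambda>j. axis j (1::real)) ` S \<subseteq> (Basis :: (real^'n) set)"
    by (auto simp: Basis_vec_def)
  then have "independent ((\<lambda>j. axis j (1::real)) ` S)"
    using independent_Basis independent_mono by blast
  then have "dim ((\<lambda>j. axis j (1::real)) ` S) = card ((\<lambda>j. axis j (1::real)) ` S)"
    by (rule dim_eq_card_independent)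
  also have "\<dots> = card S"
    by (rule card_image) (auto simp: inj_on_def axis_eq_axis)
  finally show ?thesis .
qed

lemma range_eq_from_cols:
  fixes P H :: "real^'n^'n"
  assumes good: "\<not> ker_on S P" and cS: "card S = d"
    and rP: "rank P = d" and rH: "rank H = d"
    and cols: "\<And>j. j \<in> S \<Longrightarrow> H *v axis j 1 = P *v axis j 1"
  shows "range ((*v) P) = range ((*v) H)"
proof -
  define E where "E = (\<lambda>j. axis j (1::real)) ` S"
  define B where "B = (*v) P ` E"
  have inj: "inj_on ((*v) P) (span E)"
  proof (subst linear_inj_on_iff_eq_0)
    show "subspace (span E)" by simp
    show "\<forall>x\<in>span E. P *v x = 0 \<longrightarrow> x = 0"
      using good span_support[of S] unfolding ker_on_def E_def by blast
  qed simp
  have dB: "dim B = d" unfolding B_def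
    using dim_image_eq[OF matrix_vector_mul_linear inj] dim_axis_set[of S] cS E_def by simp
  have sub: "span B = range ((*v) X)" if BX: "B \<subseteq> range ((*v) X)" and rX: "rank X = d" for X :: "real^'n^'n"
  proof (rule subspace_dim_equal)
    show "subspace (span B)" by simp
    show "subspace (range ((*v) X))" by (simp add: linear_subspace_image)
    show "span B \<subseteq> range ((*v) X)" using BX by (simp add: linear_subspace_image span_minimal)
    show "dim (range ((*v) X)) \<le> dim (span B)" using rX dB by (simp add: rank_dim_range)
  qed
  have 1: "span B = range ((*v) P)" using sub[OF _ rP] unfolding B_def by auto
  have "B \<subseteq> range ((*v) H)" unfolding B_def E_def using cols by (auto intro: range_eqI[symmetric] simp: image_iff) (metis rangeI)
  then have 2: "span B = range ((*v) H)" using sub[OF _ rH] by auto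
  show ?thesis using 1 2 by simp
qed

lemma proj_eq_from_range:
  fixes P H :: "real^'n^'n"
  assumes P: "symidem P" and H: "symidem H" and r: "range ((*v) P) = range ((*v) H)"
  shows "H = P"
proof -
  have HP: "H ** P = P"
  proof (subst matrix_eq, intro allI)
    fix x
    obtain w where w: "P *v x = H *v w" using r by (metis rangeI imageE)
    show "(H ** P) *v x = P *v x"
      by (simp add: matrix_vector_mul_assoc[symmetric] w symidem_fix[OF H])
  qed
  have PH: "P ** H = H"
  proof (subst matrix_eq, intro allI)
    fix x
    obtain w where w: "H *v x = P *v w" using r by (metis rangeI imageE)
    show "(P ** H) *v x = H *v x"
      by (simp add: matrix_vector_mul_assoc[symmetric] w symidem_fix[OF P])
  qed
  have "H = transpose H" using H by (simp add: symidem_def)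
  also have "\<dots> = transpose (P ** H)" using PH by simp
  also have "\<dots> = transpose H ** transpose P" by (simp add: matrix_transpose_mul)
  also have "\<dots> = H ** P" using P H by (simp add: symidem_def)
  also have "\<dots> = P" by (rule HP)
  finally show ?thesis .
qed



lemma partA:
  fixes P H :: "real^('n::{finite,linorder})^('n::{finite,linorder})"
  assumes PG: "P \<in> grassmannian d" and HG: "H \<in> grassmannian d"
    and good: "\<not> ker_on {i. pos i < d} P" and dN: "d < CARD('n)"
    and meas1: "\<forall>i. idx_pos i \<le> CARD('n) - 1 \<longrightarrow> norm (H *v unit_vec i)^2 = norm (P *v unit_vec i)^2"
    and meas2: "\<forall>j k. idx_pos j \<le> d \<and> j < k \<longrightarrow>
              norm (H *v (unit_vec j + unit_vec k))^2 = norm (P *v (unit_vec j + unit_vec k))^2"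
  shows "H = P"
proof -
  have P: "symidem P" and H: "symidem H" using PG HG by (auto simp: grass_symidem)
  have rP: "rank P = d" and rH: "rank H = d" using PG HG by (auto simp: grass_rank)
  have d1: "H$i$i = P$i$i" if "pos i + 1 \<le> CARD('n) - 1" for i
    using meas1 that quad1[OF P, of i] quad1[OF H, of i] by (simp add: idx_pos_pos unit_vec_def)
  have diag: "H$i$i = P$i$i" for i
  proof (cases "pos i + 1 \<le> CARD('n) - 1")
    case True then show ?thesis by (rule d1)
  next
    case False
    have oth: "H$k$k = P$k$k" if "k \<in> UNIV - {i}" for k
    proof (rule d1)
      show "pos k + 1 \<le> CARD('n) - 1"
      proof (rule ccontr)
        assume "\<not> pos k + 1 \<le> CARD('n) - 1"
        then have "k = i" using False pos_top_unique[of k i] by linarith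
        then show False using that by simp
      qed
    qed
    have "trace H = trace P" using trace_symidem[OF H] trace_symidem[OF P] rP rH by simp
    then have "H$i$i + (\<Sum>k\<in>UNIV - {i}. H$k$k) = P$i$i + (\<Sum>k\<in>UNIV - {i}. P$k$k)"
      unfolding trace_def by (simp add: sum.remove[of UNIV i])
    moreover have "(\<Sum>k\<in>UNIV - {i}. H$k$k) = (\<Sum>k\<in>UNIV - {i}. P$k$k)"
      using oth by (rule sum.cong[OF refl])
    ultimately show ?thesis by simp
  qed
  have up: "H$j$k = P$j$k" if "pos j < d" "j < k" for j k
    using meas2 that quad2[OF P, of j k] quad2[OF H, of j k] diag[of j] diag[of k]
    by (simp add: idx_pos_pos unit_vec_def)
  have row: "H$j$k = P$j$k" if j: "pos j < d" for j k
  proof -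
    consider "k = j" | "j < k" | "k < j" by (meson linorder_neq_iff)
    then show ?thesis
    proof cases
      case 1 then show ?thesis using diag by simp
    next
      case 2 then show ?thesis using up j by simp
    next
      case 3
      then have "pos k < d" using pos_less_mono[OF 3] j by simp
      then have "H$k$j = P$k$j" using up 3 by simp
      then show ?thesis using symidem_sym[OF P, of j k] symidem_sym[OF H, of j k] by simp
    qed
  qed
  have cols: "H *v axis j 1 = P *v axis j 1" if "j \<in> {i. pos i < d}" for j
  proof -
    have "H$i$j = P$i$j" for i
      using that row[of j i] symidem_sym[OF P, of i j] symidem_sym[OF H, of i j] by simp
    then show ?thesis by (simp add: vec_eq_iff mat_axis_entry)
  qed
  have cS: "card {i::'n. pos i < d} = d" using card_pos_less[where 'n='n, of d] dN by simp
  have "range ((*v) P) = range ((*v) H)"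
    by (rule range_eq_from_cols[OF good cS rP rH cols])
  then show ?thesis by (rule proj_eq_from_range[OF P H])
qed



lemma support_in_span:
  fixes c :: "real^'n"
  assumes "\<forall>i. i \<notin> S \<longrightarrow> c$i = 0"
  shows "c \<in> span ((\<lambda>i. axis i (1::real)) ` S)"
proof -
  have "c = (\<Sum>i\<in>S. c$i *\<^sub>R axis i 1)"
  proof (subst vec_eq_iff, intro allI)
    fix k
    have "(\<Sum>i\<in>S. c$i *\<^sub>R axis i (1::real))$k = (\<Sum>i\<in>S. c$i * (if k = i then 1 else 0))"
      by (simp add: sum_component axis_def)
    also have "\<dots> = (\<Sum>i\<in>S. if i = k then c$i else 0)" by (rule sum.cong) auto
    also have "\<dots> = c$k" using assms by (cases "k \<in> S") auto
    finally show "c$k = (\<Sum>i\<in>S. c$i *\<^sub>R axis i (1::real))$k" by simp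
  qed
  also have "\<dots> \<in> span ((\<lambda>i. axis i (1::real)) ` S)"
    by (intro span_sum span_scale span_base) auto
  finally show ?thesis .
qed

lemma exists_u:
  fixes P :: "real^('n::{finite,linorder})^('n::{finite,linorder})"
  assumes P: "symidem P" and r: "rank P = d" and j: "pos j < d"
  shows "\<exists>u. u \<noteq> 0 \<and> P *v u = u \<and> (\<forall>i. i < j \<longrightarrow> u$i = 0)"
proof (rule ccontr)
  assume neg: "\<not> ?thesis"
  define V where "V = range ((*v) P)"
  define \<pi> where "\<pi> = (\<lambda>x. \<chi> i. if i < j then x$i else (0::real))"
  have lin: "linear \<pi>" unfolding \<pi>_def by (rule linearI) (auto simp: vec_eq_iff)
  have subV: "subspace V" unfolding V_def by (simp add: linear_subspace_image)
  have fixV: "P *v x = x" if "x \<in> V" for x using that symidem_fix[OF P] unfolding V_def by auto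
  have inj: "inj_on \<pi> (span V)"
  proof (subst linear_inj_on_iff_eq_0[OF lin])
    show "subspace (span V)" by simp
    show "\<forall>x\<in>span V. \<pi> x = 0 \<longrightarrow> x = 0"
    proof (intro ballI impI)
      fix x assume x: "x \<in> span V" and z: "\<pi> x = 0"
      have xV: "x \<in> V" using x subV by (metis span_eq_iff)
      have "\<forall>i. i < j \<longrightarrow> x$i = 0" using z unfolding \<pi>_def by (auto simp: vec_eq_iff) (metis zero_index)
      then show "x = 0" using neg fixV[OF xV] by blast
    qed
  qed
  have "dim (\<pi> ` V) = dim V" by (rule dim_image_eq[OF lin inj])
  also have "\<dots> = d" using r by (simp add: V_def rank_dim_range)
  finally have dd: "dim (\<pi> ` V) = d" .
  have "\<pi> ` V \<subseteq> span ((\<lambda>i. axis i (1::real)) ` {i. i < j})"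
    by (auto simp: \<pi>_def intro!: support_in_span split: if_splits)
  then have "dim (\<pi> ` V) \<le> card ((\<lambda>i. axis i (1::real)) ` {i. i < j})"
    by (rule dim_le_card) simp
  also have "\<dots> \<le> card {i. i < j}" by (rule card_image_le) simp
  also have "\<dots> = pos j" by (simp add: pos_def)
  finally show False using dd j by simp
qed

lemma exists_poly:
  fixes u :: "real^('n::{finite,linorder})"
  assumes u: "u \<noteq> 0" and z: "\<forall>i. i < j \<longrightarrow> u$i = 0"
  shows "\<exists>p. p \<noteq> 0 \<and> degree p \<le> CARD('n) \<and>
           (\<forall>t::real. u \<bullet> (\<chi> i. if j \<le> i then t^(pos i) else 0) = poly p t)"
proof -
  define p where "p = (\<Sum>i\<in>{i. j \<le> i}. monom (u$i) (pos i))"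
  have ev: "u \<bullet> (\<chi> i. if j \<le> i then t^(pos i) else 0) = poly p t" for t :: real
  proof -
    have "u \<bullet> (\<chi> i. if j \<le> i then t^(pos i) else 0) = (\<Sum>i\<in>UNIV. u$i * (if j \<le> i then t^(pos i) else 0))"
      by (simp add: inner_vec_def)
    also have "\<dots> = (\<Sum>i\<in>UNIV. if j \<le> i then u$i * t^(pos i) else 0)"
      by (rule sum.cong) auto
    also have "\<dots> = (\<Sum>i\<in>{i. j \<le> i}. u$i * t^(pos i))"
      by (simp add: sum.If_cases Collect_conv_if)
    also have "\<dots> = poly p t" by (simp add: p_def poly_sum poly_monom)
    finally show ?thesis .
  qed
  obtain i0 where i0: "u$i0 \<noteq> 0" using u by (metis vec_eq_iff zero_index)
  then have ji0: "j \<le> i0" using z by (meson not_le)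
  have "coeff p (pos i0) = (\<Sum>i\<in>{i. j \<le> i}. if i = i0 then u$i else 0)"
    unfolding p_def coeff_sum coeff_monom
    by (rule sum.cong) (auto dest: injD[OF pos_inj])
  also have "\<dots> = u$i0" using ji0 by simp
  finally have "p \<noteq> 0" using i0 by auto
  moreover have "degree p \<le> CARD('n)" unfolding p_def
    by (rule degree_sum_le) (auto intro: order.trans[OF degree_monom_le] less_imp_le pos_lt)
  ultimately show ?thesis using ev by blast
qed

lemma count_roots:
  fixes p :: "real poly"
  assumes "p \<noteq> 0" "degree p \<le> n"
  shows "card {t\<in>T::nat set. poly p (real t) = 0} \<le> n"
proof -
  have fin: "finite {x. poly p x = 0}" using assms(1) by (rule poly_roots_finite)
  have "card {t\<in>T. poly p (real t) = 0} = card (real ` {t\<in>T. poly p (real t) = 0})"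
    by (rule card_image[symmetric]) (simp add: inj_on_def)
  also have "\<dots> \<le> card {x. poly p x = 0}" by (rule card_mono[OF fin]) auto
  also have "\<dots> \<le> degree p" by (rule card_poly_roots_bound[OF assms(1)])
  finally show ?thesis using assms(2) by simp
qed



definition hh :: "real^'n \<Rightarrow> real^'n^'n" where
  "hh w = mat 1 - (2 / (w \<bullet> w)) *\<^sub>R (\<chi> a b. w$a * w$b)"

lemma hh_apply: "hh w *v x = x - ((2 / (w \<bullet> w)) * (w \<bullet> x)) *\<^sub>R w"
proof (subst vec_eq_iff, intro allI)
  fix a
  have "(hh w *v x)$a = (\<Sum>b\<in>UNIV. (if a = b then 1 else 0) * x$b - (2 / (w \<bullet> w)) * w$a * (w$b * x$b))"
    by (simp add: hh_def matrix_vector_mult_def mat_def algebra_simps)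
  also have "\<dots> = (\<Sum>b\<in>UNIV. (if a = b then 1 else 0) * x$b) - (2 / (w \<bullet> w)) * w$a * (\<Sum>b\<in>UNIV. w$b * x$b)"
    by (simp add: sum_subtractf sum_distrib_left mult.assoc)
  also have "\<dots> = x$a - (2 / (w \<bullet> w)) * w$a * (\<Sum>b\<in>UNIV. w$b * x$b)"
  proof -
    have "(\<Sum>b\<in>UNIV. (if a = b then 1 else 0) * x$b) = (\<Sum>b\<in>UNIV. (if b = a then x$b else 0))"
      by (rule sum.cong) auto
    then show ?thesis by simp
  qed
  also have "\<dots> = (x - ((2 / (w \<bullet> w)) * (w \<bullet> x)) *\<^sub>R w)$a"
    by (simp add: inner_vec_def)
  finally show "(hh w *v x)$a = (x - ((2 / (w \<bullet> w)) * (w \<bullet> x)) *\<^sub>R w)$a" .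
qed

lemma hh_sym: "transpose (hh w) = hh w"
  by (simp add: hh_def vec_eq_iff transpose_def mat_def mult.commute)

lemma hh_fix: "w \<bullet> x = 0 \<Longrightarrow> hh w *v x = x"
  by (simp add: hh_apply)

lemma hh_invol_apply: "hh w *v (hh w *v x) = x"
proof (cases "w \<bullet> w = 0")
  case True then show ?thesis by (simp add: hh_apply)
next
  case False
  define c where "c = 2 / (w \<bullet> w)"
  have y: "hh w *v x = x - (c * (w \<bullet> x)) *\<^sub>R w" by (simp add: hh_apply c_def)
  have wy: "w \<bullet> (x - (c * (w \<bullet> x)) *\<^sub>R w) = - (w \<bullet> x)"
    using False by (simp add: c_def inner_diff_right algebra_simps)
  have "hh w *v (hh w *v x) = (hh w *v x) - (c * (w \<bullet> (hh w *v x))) *\<^sub>R w"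
    by (simp add: hh_apply c_def)
  also have "\<dots> = x" unfolding y wy by (simp add: algebra_simps)
  finally show ?thesis .
qed

lemma hh_invol: "hh w ** hh w = mat 1"
  by (simp add: matrix_eq matrix_vector_mul_assoc[symmetric] hh_invol_apply)

lemma hh_orth: "orthogonal_matrix (hh w)"
  by (simp add: orthogonal_matrix_def hh_sym hh_invol)

lemma hh_swap:
  fixes a e :: "real^'n"
  assumes a: "norm a = 1" and e: "norm e = 1"
  shows "hh (a - e) *v e = a"
proof (cases "a = e")
  case True then show ?thesis by (simp add: hh_apply)
next
  case False
  have aa: "a \<bullet> a = 1" and ee: "e \<bullet> e = 1" using a e by (simp_all add: norm_eq_1)
  have ww: "(a - e) \<bullet> (a - e) = 2 - 2 * (a \<bullet> e)"
    using aa ee by (simp add: inner_diff_left inner_diff_right inner_commute)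
  have "(a - e) \<bullet> (a - e) \<noteq> 0" using False by simp
  then have ne: "2 - 2 * (a \<bullet> e) \<noteq> 0" using ww by simp
  have we: "(a - e) \<bullet> e = a \<bullet> e - 1" using ee by (simp add: inner_diff_left)
  have "(2 / ((a - e) \<bullet> (a - e))) * ((a - e) \<bullet> e) = -1"
    using ne by (simp add: ww we field_simps)
  then show ?thesis by (simp add: hh_apply)
qed

lemma inner_disjoint:
  fixes x y :: "real^'n"
  assumes "\<forall>i. x$i = 0 \<or> y$i = 0"
  shows "x \<bullet> y = 0"
  unfolding inner_vec_def using assms by (intro sum.neutral) auto

definition Zset :: "'n::{finite,linorder} \<Rightarrow> (real^('n::{finite,linorder})^('n::{finite,linorder})) set" where
  "Zset j = {X. symidem X \<and> det (blk {i. i \<le> j} X) = 0 \<and> det (blk {i. i < j} X) \<noteq> 0}"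

lemma key:
  fixes P :: "real^('n::{finite,linorder})^('n::{finite,linorder})"
  assumes P: "symidem P" and u1: "P *v u = u" and u2: "\<forall>i. i < j \<longrightarrow> u$i = 0"
    and a1: "norm a = 1" and a2: "\<forall>i. i < j \<longrightarrow> a$i = 0"
    and X: "hh (a - axis j 1) ** P ** transpose (hh (a - axis j 1)) \<in> Zset j"
  shows "u \<bullet> a = 0"
proof -
  define R where "R = hh (a - axis j 1)"
  define Y where "Y = R ** P ** R"
  have Y: "symidem Y" "ker_on {i. i \<le> j} Y" "\<not> ker_on {i. i < j} Y"
    using X det_blk_zero_iff unfolding Zset_def Y_def R_def hh_sym by auto
  obtain c where c0: "c \<noteq> 0" and cs: "\<forall>i. i \<notin> {i. i \<le> j} \<longrightarrow> c$i = 0" and cY: "Y *v c = 0"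
    using Y(2) unfolding ker_on_def by blast
  have cj: "c$j \<noteq> 0"
  proof
    assume "c$j = 0"
    then have "\<forall>i. i \<notin> {i. i < j} \<longrightarrow> c$i = 0" using cs by (metis mem_Collect_eq not_less order.order_iff_strict)
    then show False using Y(3) c0 cY unfolding ker_on_def by blast
  qed
  have "R *v (P *v (R *v c)) = Y *v c" unfolding Y_def by (metis matrix_vector_mul_assoc matrix_mul_assoc)
  then have "R *v (P *v (R *v c)) = 0" using cY by simp
  then have PRc: "P *v (R *v c) = 0" using hh_invol_apply[of "a - axis j 1" "P *v (R *v c)"]
    by (simp add: R_def)
  define c' where "c' = c - c$j *\<^sub>R axis j 1"
  have c's: "\<forall>i. \<not> i < j \<longrightarrow> c'$i = 0"
    using cs by (auto simp: c'_def axis_def)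
  have "(a - axis j 1) \<bullet> c' = 0"
    by (rule inner_disjoint) (use a2 c's in \<open>auto simp: axis_def\<close>)
  then have Rc': "R *v c' = c'" by (simp add: R_def hh_fix)
  have Rej: "R *v axis j 1 = a" unfolding R_def by (rule hh_swap[OF a1]) simp
  have "R *v c = R *v c' + c$j *\<^sub>R (R *v axis j 1)"
  proof -
    have "c = c' + c$j *\<^sub>R axis j 1" by (simp add: c'_def)
    then have "R *v c = R *v (c' + c$j *\<^sub>R axis j 1)" by simp
    also have "\<dots> = R *v c' + c$j *\<^sub>R (R *v axis j 1)"
      by (simp add: matrix_vector_right_distrib matrix_vector_mult_scaleR)
    finally show ?thesis .
  qed
  also have "\<dots> = c' + c$j *\<^sub>R a" using Rc' Rej by simp
  finally have Rc: "R *v c = c' + c$j *\<^sub>R a" .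
  have "u \<bullet> (R *v c) = (P *v u) \<bullet> (R *v c)" using u1 by simp
  also have "\<dots> = u \<bullet> (P *v (R *v c))" by (rule symidem_inner[OF P])
  also have "\<dots> = 0" using PRc by simp
  finally have "u \<bullet> (R *v c) = 0" .
  moreover have "u \<bullet> c' = 0" by (rule inner_disjoint) (use u2 c's in auto)
  ultimately have "c$j * (u \<bullet> a) = 0" using Rc by (simp add: inner_add_right)
  then show ?thesis using cj by simp
qed



lemma m1: "(\<lambda>X::real^'n^'m. X$a$b) \<in> borel_measurable borel"
  by (intro borel_measurable_continuous_onI continuous_intros)

lemma symidem_entries: "symidem X \<longleftrightarrow> (\<forall>a b. X$b$a = X$a$b) \<and> (\<forall>a b. (\<Sum>k\<in>UNIV. X$a$k * X$k$b) = X$a$b)"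
  unfolding symidem_def by (auto simp: vec_eq_iff transpose_def matrix_matrix_mult_def)

lemma det_blk_expand: "det (blk I X) = (\<Sum>p\<in>{p. p permutes UNIV}. of_int (sign p) * (\<Prod>i\<in>UNIV. (if i \<in> I \<and> p i \<in> I then X$i$(p i) else if i = p i then 1 else 0)))"
  unfolding det_def blk_def by simp

lemma meas_det_blk: "(\<lambda>X::real^'n^'n. det (blk I X)) \<in> borel_measurable borel"
  unfolding det_blk_expand by (measurable; (rule m1 measurable_const sets.sets_Collect_const)?; simp)

lemma Zset_borel: "Zset j \<in> sets borel"
proof -
  have "Zset j =
    {X \<in> space borel. (\<forall>a b. X$b$a = X$a$b) \<and> (\<forall>a b. (\<Sum>k\<in>UNIV. X$a$k * X$k$b) = X$a$b) \<and> det (blk {i. i \<le> j} X) = 0 \<and> det (blk {i. i < j} X) \<noteq> 0}"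
    by (auto simp: symidem_entries Zset_def)
  also have "\<dots> \<in> sets borel"
    using meas_det_blk[of "{i. i \<le> j}"] meas_det_blk[of "{i. i < j}"] m1 by measurable
  finally show ?thesis .
qed

lemma conj_meas: "(\<lambda>P::real^'n^'n. Q ** P ** transpose Q) \<in> borel_measurable borel"
  by (intro borel_measurable_continuous_onI) (simp add: matrix_matrix_mult_def transpose_def; intro continuous_intros)

lemma Zset_null:
  fixes M :: "(real^('n::{finite,linorder})^('n::{finite,linorder})) measure"
  assumes haar: "haar_grassmannian d M" and j: "pos j < d"
  shows "Zset j \<in> null_sets M"
proof -
  have setsM: "sets M = sets borel" and PS: "prob_space M"
    and MG: "emeasure M (grassmannian d) = 1"
    and inv: "\<And>Q. orthogonal_matrix Q \<Longrightarrow> distr M M (\<lambda>P. Q ** P ** transpose Q) = M"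
    using haar unfolding haar_grassmannian_def by auto
  interpret M: prob_space M by (rule PS)
  have spM: "space M = UNIV" using sets_eq_imp_space_eq[OF setsM] by simp
  have GM: "grassmannian d \<in> sets M" using MG emeasure_notin_sets by fastforce
  have "emeasure M (space M - grassmannian d) = 0"
    using GM MG by (simp add: emeasure_compl M.emeasure_space_1)
  then have Gnull: "space M - grassmannian d \<in> null_sets M" using GM by auto
  have AEG: "AE P in M. P \<in> grassmannian d"
    by (rule AE_I'[OF Gnull]) auto
  define v :: "nat \<Rightarrow> real^('n::{finite,linorder})" where "v t = (\<chi> i. if j \<le> i then (real t)^(pos i) else 0)" for t
  define a where "a t = (1 / norm (v t)) *\<^sub>R v t" for t
  define R where "R t = hh (a t - axis j 1)" for t
  define f where "f t = (\<lambda>P. R t ** P ** transpose (R t))" for t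
  define A where "A t = f t -` Zset j" for t
  have vnz: "v t \<noteq> 0" if "t \<ge> 1" for t
  proof
    assume "v t = 0"
    then have "(v t)$j = 0" by simp
    then show False using that by (simp add: v_def)
  qed
  have a1: "norm (a t) = 1" if "t \<ge> 1" for t using vnz[OF that] by (simp add: a_def)
  have a2: "\<forall>i. i < j \<longrightarrow> (a t)$i = 0" for t by (auto simp: a_def v_def dest: leD)
  have Zs: "Zset j \<in> sets M" using Zset_borel setsM by simp
  have fmeas: "f t \<in> measurable M M" for t
    unfolding f_def using conj_meas measurable_cong_sets[OF setsM setsM] by blast
  have Ameas: "A t \<in> sets M" for t
    using measurable_sets[OF fmeas Zs] by (simp add: A_def spM)
  have mA: "measure M (A t) = measure M (Zset j)" for t
  proof -
    have "measure M (Zset j) = measure (distr M M (f t)) (Zset j)"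
      using inv[OF hh_orth] by (simp add: f_def R_def)
    also have "\<dots> = measure M (A t)"
      by (simp add: measure_distr[OF fmeas Zs] A_def spM)
    finally show ?thesis by simp
  qed
  have cnt: "card {t\<in>{1..K}. P \<in> A t} \<le> CARD('n)" if PG: "P \<in> grassmannian d" for P K
  proof -
    have P: "symidem P" and rP: "rank P = d" using PG by (auto simp: grass_symidem grass_rank)
    obtain u where u0: "u \<noteq> 0" and u1: "P *v u = u" and u2: "\<forall>i. i < j \<longrightarrow> u$i = 0"
      using exists_u[OF P rP j] by blast
    obtain p where p0: "p \<noteq> 0" and pd: "degree p \<le> CARD('n)"
      and pe: "\<forall>s::real. u \<bullet> (\<chi> i. if j \<le> i then s^(pos i) else 0) = poly p s"
      using exists_poly[OF u0 u2] by blast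
    have "{t\<in>{1..K}. P \<in> A t} \<subseteq> {t\<in>{1..K}. poly p (real t) = 0}"
    proof safe
      fix t assume t: "t \<in> {1..K}" and PA: "P \<in> A t"
      then have t1: "t \<ge> 1" by simp
      have "u \<bullet> a t = 0"
        using key[OF P u1 u2 a1[OF t1] a2] PA by (simp add: A_def f_def R_def)
      then have "u \<bullet> v t = 0" using vnz[OF t1] by (simp add: a_def)
      then show "poly p (real t) = 0" using pe by (simp add: v_def)
    qed
    then have "card {t\<in>{1..K}. P \<in> A t} \<le> card {t\<in>{1..K}. poly p (real t) = 0}"
      by (rule card_mono[rotated]) simp
    also have "\<dots> \<le> CARD('n)" by (rule count_roots[OF p0 pd])
    finally show ?thesis .
  qed
  have ineq: "real K * measure M (Zset j) \<le> real CARD('n)" for K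
  proof -
    have int: "integrable M (indicator (A t) :: _ \<Rightarrow> real)" for t
      using Ameas by (simp add: M.emeasure_space_1 M.emeasure_finite less_top[symmetric])
    have "real K * measure M (Zset j) = (\<Sum>t\<in>{1..K}. measure M (A t))" by (simp add: mA)
    also have "\<dots> = (\<Sum>t\<in>{1..K}. integral\<^sup>L M (indicator (A t)))"
      using Ameas by (simp add: spM)
    also have "\<dots> = integral\<^sup>L M (\<lambda>P. \<Sum>t\<in>{1..K}. indicator (A t) P)"
      by (rule Bochner_Integration.integral_sum[symmetric]) (rule int)
    also have "\<dots> \<le> integral\<^sup>L M (\<lambda>P. real CARD('n))"
    proof (rule integral_mono_AE)
      show "integrable M (\<lambda>P. \<Sum>t\<in>{1..K}. indicator (A t) P :: real)"
        using int by (rule Bochner_Integration.integrable_sum)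
      show "integrable M (\<lambda>P. real CARD('n))" by simp
      show "AE P in M. (\<Sum>t\<in>{1..K}. indicator (A t) P) \<le> real CARD('n)"
        using AEG
      proof eventually_elim
        case (elim P)
        have "(\<Sum>t\<in>{1..K}. indicator (A t) P :: real) = real (card ({1..K} \<inter> {t. P \<in> A t}))"
          by (simp add: indicator_def)
        also have "{1..K} \<inter> {t. P \<in> A t} = {t\<in>{1..K}. P \<in> A t}" by auto
        finally show ?case using cnt[OF elim, of K] by simp
      qed
    qed
    also have "\<dots> = real CARD('n)" by (simp add: M.prob_space)
    finally show ?thesis .
  qed
  have m0: "measure M (Zset j) = 0"
  proof (rule ccontr)
    assume "measure M (Zset j) \<noteq> 0"
    then have "measure M (Zset j) > 0" using measure_nonneg[of M "Zset j"] by linarith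
    then obtain K where "real CARD('n) < real K * measure M (Zset j)"
      using ex_less_of_nat_mult by blast
    then show False using ineq[of K] by simp
  qed
  show ?thesis using Zs m0 by (simp add: M.emeasure_eq_measure null_sets_def)
qed



theorem theorem4p5:
  fixes d :: nat
    and M :: "(real^('n::{finite,linorder})^('n::{finite,linorder})) measure"
    and \<mu> :: "(real^('n::{finite,linorder})) measure"
  assumes "1 \<le> d" and "d < CARD('n)"
    and "haar_grassmannian d M"
    and "sets \<mu> = sets borel" and "prob_space \<mu>"
    and "absolutely_continuous lborel \<mu>"
  shows "AE Px in M \<Otimes>\<^sub>M \<mu>. determined_by_measurements d (fst Px) (snd Px)"
proof -
  have setsM: "sets M = sets borel" and PS: "prob_space M"
    and MG: "emeasure M (grassmannian d) = 1"
    using assms(3) unfolding haar_grassmannian_def by auto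
  interpret M: prob_space M by (rule PS)
  interpret mu: prob_space \<mu> by (rule assms(5))
  have spM: "space M = UNIV" using sets_eq_imp_space_eq[OF setsM] by simp
  have GM: "grassmannian d \<in> sets M" using MG emeasure_notin_sets by fastforce
  have "emeasure M (space M - grassmannian d) = 0"
    using GM MG by (simp add: emeasure_compl M.emeasure_space_1)
  then have Gnull: "space M - grassmannian d \<in> null_sets M" using GM by auto
  define N0 where "N0 = (\<Union>j\<in>{j. pos j < d}. Zset j) \<union> (space M - grassmannian d)"
  have "(\<Union>j\<in>{j. pos j < d}. Zset j) \<in> null_sets M"
    by (rule null_sets_UN') (auto intro: Zset_null[OF assms(3)])
  then have N0: "N0 \<in> null_sets M" unfolding N0_def using Gnull by auto
  have good: "P \<in> grassmannian d \<and> \<not> ker_on {i. pos i < d} P" if "P \<notin> N0" for P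
  proof -
    have PG: "P \<in> grassmannian d" using that spM by (auto simp: N0_def)
    have P: "symidem P" using PG by (rule grass_symidem)
    have "\<not> ker_on {i. pos i < d} P"
    proof
      assume "ker_on {i. pos i < d} P"
      then obtain c where c0: "c \<noteq> 0" and cs: "\<forall>i. i \<notin> {i. pos i < d} \<longrightarrow> c$i = 0" and cP: "P *v c = 0"
        unfolding ker_on_def by blast
      define J where "J = {j. ker_on {i. i \<le> j} P}"
      obtain m where m: "c$m \<noteq> 0" using c0 by (metis vec_eq_iff zero_index)
      define mx where "mx = Max {i. c$i \<noteq> 0}"
      have "mx \<in> {i. c$i \<noteq> 0}" unfolding mx_def using m by (intro Max_in) auto
      then have mxin: "c$mx \<noteq> 0" by simp
      have mxge: "c$i = 0" if "\<not> i \<le> mx" for i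
        using that Max_ge[of "{i. c$i \<noteq> 0}" i] unfolding mx_def by fastforce
      have mxJ: "mx \<in> J" unfolding J_def ker_on_def using c0 cP mxge by auto
      have mxS: "pos mx < d" using cs mxin by auto
      define j where "j = Min J"
      have jJ: "j \<in> J" unfolding j_def using mxJ by (intro Min_in) auto
      have jle: "j \<le> mx" unfolding j_def using mxJ by (intro Min_le) auto
      have jS: "pos j < d" using pos_le_mono[OF jle] mxS by simp
      have nlt: "\<not> ker_on {i. i < j} P"
      proof
        assume "ker_on {i. i < j} P"
        then obtain c' where c'0: "c' \<noteq> 0" and c's: "\<forall>i. i \<notin> {i. i < j} \<longrightarrow> c'$i = 0" and c'P: "P *v c' = 0"
          unfolding ker_on_def by blast
        obtain m' where m': "c'$m' \<noteq> 0" using c'0 by (metis vec_eq_iff zero_index)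
        define mx' where "mx' = Max {i. c'$i \<noteq> 0}"
        have "mx' \<in> {i. c'$i \<noteq> 0}" unfolding mx'_def using m' by (intro Max_in) auto
        then have mx'in: "c'$mx' \<noteq> 0" by simp
        have mx'ge: "c'$i = 0" if "\<not> i \<le> mx'" for i
          using that Max_ge[of "{i. c'$i \<noteq> 0}" i] unfolding mx'_def by fastforce
        have "mx' \<in> J" unfolding J_def ker_on_def using c'0 c'P mx'ge by auto
        then have "j \<le> mx'" unfolding j_def by (intro Min_le) auto
        moreover have "mx' < j" using c's mx'in by auto
        ultimately show False by simp
      qed
      have "P \<in> Zset j"
        using P jJ nlt det_blk_zero_iff[OF P] unfolding Zset_def J_def by auto
      then show False using that jS by (auto simp: N0_def)
    qed
    then show ?thesis using PG by simp
  qed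
  have "N0 \<times> space \<mu> \<in> null_sets (M \<Otimes>\<^sub>M \<mu>)"
    by (rule mu.times_in_null_sets1[OF N0]) simp
  then show ?thesis
  proof (rule AE_I')
    show "{x \<in> space (M \<Otimes>\<^sub>M \<mu>). \<not> determined_by_measurements d (fst x) (snd x)} \<subseteq> N0 \<times> space \<mu>"
    proof safe
      fix P x
      assume sp: "(P, x) \<in> space (M \<Otimes>\<^sub>M \<mu>)"
        and nd: "\<not> determined_by_measurements d (fst (P, x)) (snd (P, x))"
      show "x \<in> space \<mu>" using sp by (simp add: space_pair_measure)
      show "P \<in> N0"
      proof (rule ccontr)
        assume "P \<notin> N0"
        then have PG: "P \<in> grassmannian d" and gd: "\<not> ker_on {i. pos i < d} P" using good by auto
        have "determined_by_measurements d P x"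
          unfolding determined_by_measurements_def
        proof (intro ballI impI)
          fix H assume HG: "H \<in> grassmannian d" and ms: "(\<forall>i. idx_pos i \<le> CARD('n) - 1 \<longrightarrow>
              norm (H *v unit_vec i)^2 = norm (P *v unit_vec i)^2) \<and>
           (\<forall>j k. idx_pos j \<le> d \<and> j < k \<longrightarrow>
              norm (H *v (unit_vec j + unit_vec k))^2 = norm (P *v (unit_vec j + unit_vec k))^2) \<and>
           norm (H *v x)^2 = norm (P *v x)^2"
          show "H = P" by (rule partA[OF PG HG gd assms(2)]) (use ms in auto)
        qed
        then show False using nd by simp
      qed
    qed
  qed
qed


end
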